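(* Assume $F$ is $K$-smooth with $\ell\in\mathrm{int}(K)$ and strongly $K$-convex with $\mu\in\mathrm{int}(K)$. Let $e\in\mathrm{int}(K)$, $L_{\max}:=\max_{c^*\in C_e}\langle c^*,\ell\rangle$, $L\ge L_{\max}$, $\mu_{\min}:=\min_{c^*\in C_e}\langle c^*,\mu\rangle$, and let $\{x^k\}$ be generated from $x^0\in\mathbb{R}^n$ by $$x^{k+1}:=\arg\min_{x\in\mathbb{R}^n}\max_{c^*\in C_e}\langle c^*,JF(x^k)(x-x^k)\rangle+\tfrac L2\|x-x^k\|^2$$ (the $K$-steepest descent method without line search), assumed not to terminate ($x^{k+1}\neq x^k$ for all $k$). Then: (i) $\{x^k\}$ converges to an efficient solution $x^*$ of $\min_K F(x)$; (ii) $\|x^{k+1}-x^*\|\le\sqrt{1-\mu_{\min}/L}\,\|x^k-x^*\|$ for all $k\ge0$.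
   Context: $K\subset\mathbb{R}^m$ closed convex pointed cone with nonempty interior; $y\preceq_K y'$ iff $y'-y\in K$. $K^*=\{c:\langle c,y\rangle\ge0\ \forall y\in K\}$; for $e\in\mathrm{int}(K)$, $C_e:=\{c^*\in K^*:\langle c^*,e\rangle=1\}$. $F:\mathbb{R}^n\to\mathbb{R}^m$ differentiable with Jacobian $JF$. Strongly $K$-convex with $\mu\in K$: $JF(x)(y-x)+\tfrac12\|y-x\|^2\mu\preceq_K F(y)-F(x)$ $\forall x,y$. $K$-smooth with $\ell\in K$: $F(y)-F(x)\preceq_K JF(x)(y-x)+\tfrac12\|y-x\|^2\ell$ $\forall x,y$. $x^*$ is efficient if there is no $x$ with $F(x)\preceq_K F(x^* )$ and $F(x)\neq F(x^* )$. *)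

theory Defs
  imports "HOL-Analysis.Analysis"
begin

definition cone_le :: "'b::real_vector set \<Rightarrow> 'b \<Rightarrow> 'b \<Rightarrow> bool" where
  "cone_le K y y' \<longleftrightarrow> y' - y \<in> K"

definition proper_cone :: "'b::euclidean_space set \<Rightarrow> bool" where
  "proper_cone K \<longleftrightarrow> closed K \<and> convex K \<and> cone K \<and> K \<inter> uminus ` K = {0} \<and> interior K \<noteq> {}"

definition dual_cone :: "'b::euclidean_space set \<Rightarrow> 'b set" where
  "dual_cone K = {c. \<forall>y\<in>K. c \<bullet> y \<ge> 0}"

definition Cset :: "'b::euclidean_space set \<Rightarrow> 'b \<Rightarrow> 'b set" where
  "Cset K e = {c \<in> dual_cone K. c \<bullet> e = 1}"

definition strongly_K_convex ::
  "'b::euclidean_space set \<Rightarrow> ('a::euclidean_space \<Rightarrow> 'b) \<Rightarrow> ('a \<Rightarrow> 'a \<Rightarrow> 'b) \<Rightarrow> 'b \<Rightarrow> bool" where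
  "strongly_K_convex K F JF \<mu> \<longleftrightarrow>
     (\<forall>x y. cone_le K (JF x (y - x) + ((norm (y - x))\<^sup>2 / 2) *\<^sub>R \<mu>) (F y - F x))"

definition K_smooth ::
  "'b::euclidean_space set \<Rightarrow> ('a::euclidean_space \<Rightarrow> 'b) \<Rightarrow> ('a \<Rightarrow> 'a \<Rightarrow> 'b) \<Rightarrow> 'b \<Rightarrow> bool" where
  "K_smooth K F JF l \<longleftrightarrow>
     (\<forall>x y. cone_le K (F y - F x) (JF x (y - x) + ((norm (y - x))\<^sup>2 / 2) *\<^sub>R l))"

definition efficient ::
  "'b::euclidean_space set \<Rightarrow> ('a \<Rightarrow> 'b) \<Rightarrow> 'a \<Rightarrow> bool" where
  "efficient K F xs \<longleftrightarrow> \<not> (\<exists>x. cone_le K (F x) (F xs) \<and> F x \<noteq> F xs)"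

end

theory Submission
  imports Defs
begin

lemma dual_interior:
  assumes v: "v \<in> interior K"
  shows "\<exists>r>0. \<forall>c\<in>dual_cone K. c \<bullet> v \<ge> r * norm c"
proof -
  obtain r where r: "r > 0" "cball v r \<subseteq> K" using v mem_interior_cball by blast
  have "c \<bullet> v \<ge> r * norm c" if c: "c \<in> dual_cone K" for c
  proof (cases "c = 0")
    case True then show ?thesis by simp
  next
    case False
    define y where "y = v - (r / norm c) *\<^sub>R c"
    have "dist v y = r" using False r by (simp add: y_def dist_norm)
    then have "y \<in> K" using r by auto
    then have "0 \<le> c \<bullet> y" using c by (auto simp: dual_cone_def)
    also have "c \<bullet> y = c \<bullet> v - r * norm c"
      using False by (simp add: y_def inner_diff_right power2_norm_eq_inner[symmetric] power2_eq_square)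
    finally show ?thesis by simp
  qed
  then show ?thesis using r by blast
qed

lemma norm_sq_comb:
  fixes d w :: "'a::real_inner"
  shows "(norm ((1-t) *\<^sub>R d + t *\<^sub>R w))\<^sup>2 = (1-t) * (norm d)\<^sup>2 + t * (norm w)\<^sup>2 - t*(1-t)*(norm (w - d))\<^sup>2"
  by (simp add: power2_norm_eq_inner inner_add_left inner_add_right inner_diff_left inner_diff_right inner_commute algebra_simps)

lemma three_point:
  fixes \<phi> :: "'a::real_inner \<Rightarrow> real"
  assumes cvx: "\<And>d w t. 0 \<le> t \<Longrightarrow> t \<le> 1 \<Longrightarrow> \<phi> ((1-t) *\<^sub>R d + t *\<^sub>R w) \<le> (1-t) * \<phi> d + t * \<phi> w"
    and mn: "\<And>w. \<phi> d + L/2 * (norm d)\<^sup>2 \<le> \<phi> w + L/2 * (norm w)\<^sup>2"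
    and L: "L > 0"
  shows "\<phi> d + L/2 * (norm d)\<^sup>2 + L/2 * (norm (w - d))\<^sup>2 \<le> \<phi> w + L/2 * (norm w)\<^sup>2"
proof (rule ccontr)
  define \<psi> where "\<psi> v = \<phi> v + L/2 * (norm v)\<^sup>2" for v
  define a where "a = (norm (w - d))\<^sup>2"
  define D where "D = \<psi> w - \<psi> d - L/2 * a"
  assume "\<not> ?thesis"
  then have D: "D < 0" by (simp add: D_def \<psi>_def a_def)
  have key: "0 \<le> D + L/2 * t * a" if t: "0 < t" "t \<le> 1" for t
  proof -
    have "\<psi> d \<le> \<psi> ((1-t) *\<^sub>R d + t *\<^sub>R w)" using mn by (simp add: \<psi>_def)
    also have "\<dots> \<le> (1-t) * \<phi> d + t * \<phi> w + L/2 * ((1-t) * (norm d)\<^sup>2 + t * (norm w)\<^sup>2 - t*(1-t)*a)"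
      unfolding \<psi>_def norm_sq_comb a_def using cvx[of t d w] t by simp
    also have "\<dots> = (1-t) * \<psi> d + t * \<psi> w - L/2*t*(1-t)*a" unfolding \<psi>_def by (simp add: field_simps)
    finally have "0 \<le> t * (\<psi> w - \<psi> d - L/2*(1-t)*a)" by (simp add: algebra_simps)
    then have "0 \<le> \<psi> w - \<psi> d - L/2*(1-t)*a" using t by (simp add: zero_le_mult_iff)
    then show ?thesis by (simp add: D_def field_simps)
  qed
  have a0: "a \<ge> 0" by (simp add: a_def)
  show False
  proof (cases "a = 0")
    case True
    then show False using key[of 1] D by simp
  next
    case False
    then have apos: "a > 0" using a0 by simp
    define t where "t = min 1 (-D / (L * a))"
    have t0: "t > 0" using D apos L by (simp add: t_def divide_neg_pos)
    have t1: "t \<le> 1" by (simp add: t_def)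
    have "t * (L*a) \<le> -D" using apos L by (simp add: t_def min_def field_simps split: if_splits)
    then have "L/2 * t * a \<le> -D/2" by (simp add: algebra_simps)
    then show False using key[OF t0 t1] D by linarith
  qed
qed

lemma Cset_nonempty:
  fixes K :: "'b::euclidean_space set"
  assumes K: "proper_cone K" and e: "e \<in> interior K"
  shows "Cset K e \<noteq> {}"
proof -
  have cl: "closed K" and cv: "convex K" and cn: "cone K" and pt: "K \<inter> uminus ` K = {0}"
    using K by (auto simp: proper_cone_def)
  have eK: "e \<in> K" using e interior_subset by blast
  have "-e \<notin> K"
  proof
    assume "-e \<in> K"
    then have "e \<in> uminus ` K" by (metis image_eqI minus_minus)
    then have e0: "e = 0" using pt eK by blast
    obtain r where r: "r > 0" "cball e r \<subseteq> K" using e mem_interior_cball by blast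
    obtain b :: 'b where b: "b \<in> Basis" using nonempty_Basis by blast
    have "r *\<^sub>R b \<in> K" "- (r *\<^sub>R b) \<in> K" using r e0 b by (auto simp: subset_iff)
    then have "r *\<^sub>R b \<in> uminus ` K" by (metis image_eqI minus_minus)
    then have "r *\<^sub>R b = 0" using pt \<open>r *\<^sub>R b \<in> K\<close> by blast
    then show False using r b by (simp add: nonzero_Basis)
  qed
  then obtain a b where ab: "a \<bullet> (-e) < b" "\<forall>x\<in>K. b < a \<bullet> x"
    using separating_hyperplane_closed_point[OF cv cl] by blast
  have "0 \<in> K" using pt by blast
  then have b0: "b < 0" using ab by auto
  have adual: "a \<in> dual_cone K" unfolding dual_cone_def
  proof (intro CollectI ballI)
    fix y assume y: "y \<in> K"
    show "0 \<le> a \<bullet> y"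
    proof (rule ccontr)
      assume "\<not> 0 \<le> a \<bullet> y"
      then have neg: "a \<bullet> y < 0" by simp
      define t where "t = b / (a \<bullet> y)"
      have "t \<ge> 0" using neg b0 by (simp add: t_def divide_nonpos_neg)
      then have "t *\<^sub>R y \<in> K" using cn y by (simp add: cone_def)
      then have "b < a \<bullet> (t *\<^sub>R y)" using ab by blast
      also have "\<dots> = b" using neg by (simp add: t_def)
      finally show False by simp
    qed
  qed
  have ae: "a \<bullet> e > 0" using ab b0 by simp
  have "(1 / (a \<bullet> e)) *\<^sub>R a \<in> Cset K e"
    using adual ae unfolding Cset_def dual_cone_def by auto
  then show ?thesis by blast
qed

lemma quad_bound:
  fixes a b n :: real
  assumes "a > 0" "n \<ge> 0" "b \<ge> 0" "n\<^sup>2 / 2 * a \<le> b * n"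
  shows "n \<le> 2 * b / a"
proof (cases "n = 0")
  case True then show ?thesis using assms by simp
next
  case False
  then have "n > 0" using assms by simp
  have "n * (n * a / 2) \<le> n * b" using assms(4) by (simp add: power2_eq_square algebra_simps)
  then have "n * a / 2 \<le> b" using \<open>n > 0\<close> by (simp add: mult_le_cancel_left)
  then show ?thesis using assms(1) by (simp add: field_simps)
qed

theorem lemma4p1:
  fixes K :: "'b::euclidean_space set"
    and F :: "'a::euclidean_space \<Rightarrow> 'b"
    and JF :: "'a \<Rightarrow> 'a \<Rightarrow> 'b"
    and l \<mu> e :: 'b
    and L :: real
    and x :: "nat \<Rightarrow> 'a"
  assumes K: "proper_cone K"
    and deriv: "\<And>z. (F has_derivative JF z) (at z)"
    and smooth: "K_smooth K F JF l" and ell: "l \<in> interior K"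
    and sconv: "strongly_K_convex K F JF \<mu>" and mu: "\<mu> \<in> interior K"
    and e: "e \<in> interior K"
    and L: "L \<ge> (SUP c\<in>Cset K e. c \<bullet> l)"
    and step: "\<And>k z.
      (SUP c\<in>Cset K e. c \<bullet> JF (x k) (x (Suc k) - x k)) + L / 2 * (norm (x (Suc k) - x k))\<^sup>2
      \<le> (SUP c\<in>Cset K e. c \<bullet> JF (x k) (z - x k)) + L / 2 * (norm (z - x k))\<^sup>2"
    and nonterm: "\<And>k. x (Suc k) \<noteq> x k"
  shows "\<exists>xs. x \<longlonglongrightarrow> xs \<and> efficient K F xs \<and>
           (\<forall>k. norm (x (Suc k) - xs)
                  \<le> sqrt (1 - (INF c\<in>Cset K e. c \<bullet> \<mu>) / L) * norm (x k - xs))"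
proof -
  define C where "C = Cset K e"
  have Cne: "C \<noteq> {}" using Cset_nonempty[OF K e] by (simp add: C_def)
  have Cdual: "\<And>c y. c \<in> C \<Longrightarrow> y \<in> K \<Longrightarrow> 0 \<le> c \<bullet> y" by (auto simp: C_def Cset_def dual_cone_def)
  have CdK: "\<And>c. c \<in> C \<Longrightarrow> c \<in> dual_cone K" by (auto simp: C_def Cset_def)
  have Ce: "\<And>c. c \<in> C \<Longrightarrow> c \<bullet> e = 1" by (auto simp: C_def Cset_def)
  obtain re where re: "re > 0" "\<forall>c\<in>dual_cone K. c \<bullet> e \<ge> re * norm c" using dual_interior[OF e] by blast
  have Cbd: "norm c \<le> 1/re" if c: "c \<in> C" for c
  proof -
    have "re * norm c \<le> 1" using re Ce[OF c] CdK[OF c] by auto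
    then show "norm c \<le> 1/re" using re by (simp add: field_simps)
  qed
  have bdA: "bdd_above ((\<lambda>c. c \<bullet> v) ` C)" for v
  proof (rule bdd_aboveI2)
    fix c assume c: "c \<in> C"
    have "c \<bullet> v \<le> norm c * norm v" by (rule norm_cauchy_schwarz)
    also have "\<dots> \<le> 1/re * norm v" using mult_right_mono[OF Cbd[OF c] norm_ge_zero[of v]] by simp
    finally show "c \<bullet> v \<le> 1/re * norm v" .
  qed
  have bdB: "bdd_below ((\<lambda>c. c \<bullet> v) ` C)" for v
  proof (rule bdd_belowI2)
    fix c assume c: "c \<in> C"
    have "\<bar>c \<bullet> v\<bar> \<le> norm c * norm v" by (rule Cauchy_Schwarz_ineq2)
    also have "\<dots> \<le> 1/re * norm v" using mult_right_mono[OF Cbd[OF c] norm_ge_zero[of v]] by simp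
    finally show "- (1/re * norm v) \<le> c \<bullet> v" by linarith
  qed
  have sm: "c \<bullet> (F z - F y) \<le> c \<bullet> JF y (z - y) + (norm (z-y))\<^sup>2/2 * (c \<bullet> l)" if c: "c \<in> C" for c y z
  proof -
    have "(JF y (z - y) + ((norm (z - y))\<^sup>2 / 2) *\<^sub>R l) - (F z - F y) \<in> K"
      using smooth by (simp add: K_smooth_def cone_le_def)
    from Cdual[OF c this] show ?thesis by (simp add: inner_diff_right inner_add_right)
  qed
  have sc: "c \<bullet> JF y (z - y) + (norm (z-y))\<^sup>2/2 * (c \<bullet> \<mu>) \<le> c \<bullet> (F z - F y)" if c: "c \<in> C" for c y z
  proof -
    have "(F z - F y) - (JF y (z - y) + ((norm (z - y))\<^sup>2 / 2) *\<^sub>R \<mu>) \<in> K"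
      using sconv by (simp add: strongly_K_convex_def cone_le_def)
    from Cdual[OF c this] show ?thesis by (simp add: inner_diff_right inner_add_right)
  qed
  define m where "m = (INF c\<in>C. c \<bullet> \<mu>)"
  have cL: "c \<bullet> l \<le> L" if "c \<in> C" for c
    using cSUP_upper[OF that bdA[of l]] L by (simp add: C_def)
  have cm: "m \<le> c \<bullet> \<mu>" if "c \<in> C" for c
    using cINF_lower[OF bdB[of \<mu>] that] by (simp add: m_def)
  obtain c0 where c0: "c0 \<in> C" using Cne by blast
  obtain rl where rl: "rl > 0" "\<forall>c\<in>dual_cone K. c \<bullet> l \<ge> rl * norm c" using dual_interior[OF ell] by blast
  obtain rm where rm: "rm > 0" "\<forall>c\<in>dual_cone K. c \<bullet> \<mu> \<ge> rm * norm c" using dual_interior[OF mu] by blast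
  have c0n: "norm c0 > 0" using Ce[OF c0] by (cases "c0 = 0") auto
  have "c0 \<bullet> l > 0"
  proof -
    have "rl * norm c0 > 0" using rl c0n by simp
    then show ?thesis using rl CdK[OF c0] by force
  qed
  then have Lpos: "L > 0" using cL[OF c0] by linarith
  have en: "norm e > 0" using Ce[OF c0] by (cases "e = 0") auto
  have mpos: "m > 0"
  proof -
    have "rm / norm e \<le> c \<bullet> \<mu>" if c: "c \<in> C" for c
    proof -
      have "1 \<le> norm c * norm e" using Ce[OF c] norm_cauchy_schwarz[of c e] by simp
      then have "1 / norm e \<le> norm c" using en by (simp add: field_simps)
      then have "rm / norm e \<le> rm * norm c" using rm by (simp add: mult_left_mono divide_inverse)
      also have "\<dots> \<le> c \<bullet> \<mu>" using rm CdK[OF c] by blast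
      finally show ?thesis .
    qed
    then have "rm / norm e \<le> m" unfolding m_def by (intro cINF_greatest[OF Cne])
    moreover have "rm / norm e > 0" using rm en by simp
    ultimately show ?thesis by linarith
  qed
  have mL: "m \<le> L"
  proof -
    obtain b :: 'a where b: "b \<in> Basis" using nonempty_Basis by blast
    have "c0 \<bullet> JF 0 b + 1/2 * (c0 \<bullet> \<mu>) \<le> c0 \<bullet> JF 0 b + 1/2 * (c0 \<bullet> l)"
      using sm[OF c0, where y=0 and z=b] sc[OF c0, where y=0 and z=b] b by simp
    then have "c0 \<bullet> \<mu> \<le> c0 \<bullet> l" by simp
    then show ?thesis using cm[OF c0] cL[OF c0] by linarith
  qed
  have lin: "linear (JF z)" for z using has_derivative_linear[OF deriv] .
  define \<phi> where "\<phi> k v = (SUP c\<in>C. c \<bullet> JF (x k) v)" for k v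
  have \<phi>up: "c \<bullet> JF (x k) v \<le> \<phi> k v" if "c \<in> C" for c k v
    unfolding \<phi>_def using cSUP_upper[OF that bdA] by simp
  have \<phi>cvx: "\<phi> k ((1-t) *\<^sub>R d + t *\<^sub>R w) \<le> (1-t) * \<phi> k d + t * \<phi> k w"
    if t: "0 \<le> t" "t \<le> 1" for k d w and t :: real
    unfolding \<phi>_def[of k "(1-t) *\<^sub>R d + t *\<^sub>R w"]
  proof (rule cSUP_least[OF Cne])
    fix c assume c: "c \<in> C"
    have "c \<bullet> JF (x k) ((1-t) *\<^sub>R d + t *\<^sub>R w) = (1-t) * (c \<bullet> JF (x k) d) + t * (c \<bullet> JF (x k) w)"
      using lin[of "x k"] by (simp add: linear_add linear_scale inner_add_right)
    also have "\<dots> \<le> (1-t) * \<phi> k d + t * \<phi> k w"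
      using \<phi>up[OF c, of k d] \<phi>up[OF c, of k w] t by (intro add_mono mult_left_mono) auto
    finally show "c \<bullet> JF (x k) ((1-t) *\<^sub>R d + t *\<^sub>R w) \<le> (1-t) * \<phi> k d + t * \<phi> k w" .
  qed
  have \<phi>0: "\<phi> k 0 = 0" for k
    unfolding \<phi>_def using linear_0[OF lin[of "x k"]] Cne by simp
  have step': "\<phi> k (x (Suc k) - x k) + L/2 * (norm (x (Suc k) - x k))\<^sup>2 \<le> \<phi> k w + L/2 * (norm w)\<^sup>2" for k w
    using step[of k "x k + w"] by (simp add: \<phi>_def C_def)
  have tp: "\<phi> k (x (Suc k) - x k) + L/2 * (norm (x (Suc k) - x k))\<^sup>2 + L/2 * (norm (w - (x (Suc k) - x k)))\<^sup>2
      \<le> \<phi> k w + L/2 * (norm w)\<^sup>2" for k w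
    by (rule three_point[OF \<phi>cvx step' Lpos])
  define S where "S k = {z. \<forall>c\<in>C. c \<bullet> F z \<le> c \<bullet> F (x k)}" for k
  have desc: "c \<bullet> F (x (Suc k)) \<le> c \<bullet> F (x k)" if c: "c \<in> C" for c k
  proof -
    let ?d = "x (Suc k) - x k"
    have "c \<bullet> (F (x (Suc k)) - F (x k)) \<le> c \<bullet> JF (x k) ?d + (norm ?d)\<^sup>2/2 * (c \<bullet> l)"
      using sm[OF c] .
    also have "\<dots> \<le> \<phi> k ?d + L/2 * (norm ?d)\<^sup>2"
      using \<phi>up[OF c, of k ?d] mult_left_mono[OF cL[OF c], of "(norm ?d)\<^sup>2/2"] by (simp add: algebra_simps)
    also have "\<dots> \<le> 0" using step'[of k 0] \<phi>0 by simp
    finally show ?thesis by (simp add: inner_diff_right)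
  qed
  have contr: "L * (norm (z - x (Suc k)))\<^sup>2 \<le> (L - m) * (norm (z - x k))\<^sup>2" if z: "z \<in> S (Suc k)" for z k
  proof -
    define d where "d = x (Suc k) - x k"
    define w where "w = z - x k"
    have "\<phi> k w \<le> \<phi> k d + L/2 * (norm d)\<^sup>2 - m/2 * (norm w)\<^sup>2"
      unfolding \<phi>_def[of k w]
    proof (rule cSUP_least[OF Cne])
      fix c assume c: "c \<in> C"
      have 1: "c \<bullet> JF (x k) w \<le> c \<bullet> (F z - F (x k)) - (norm w)\<^sup>2/2 * (c \<bullet> \<mu>)"
        using sc[OF c, where y="x k" and z=z] by (simp add: w_def)
      have 2: "c \<bullet> (F z - F (x k)) \<le> c \<bullet> (F (x (Suc k)) - F (x k))"
        using z c by (simp add: S_def inner_diff_right)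
      have 3: "c \<bullet> (F (x (Suc k)) - F (x k)) \<le> \<phi> k d + L/2 * (norm d)\<^sup>2"
        using sm[OF c, where y="x k" and z="x (Suc k)"] \<phi>up[OF c, of k d] cL[OF c]
          mult_left_mono[OF cL[OF c], of "(norm d)\<^sup>2/2"]
        unfolding d_def by (simp add: field_simps)
      have 4: "(norm w)\<^sup>2/2 * m \<le> (norm w)\<^sup>2/2 * (c \<bullet> \<mu>)"
        using cm[OF c] by (simp add: mult_left_mono)
      show "c \<bullet> JF (x k) w \<le> \<phi> k d + L/2 * (norm d)\<^sup>2 - m/2 * (norm w)\<^sup>2"
        using 1 2 3 4 by (simp add: field_simps)
    qed
    moreover have "\<phi> k d + L/2 * (norm d)\<^sup>2 + L/2 * (norm (w - d))\<^sup>2 \<le> \<phi> k w + L/2 * (norm w)\<^sup>2"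
      using tp[of k w] by (simp add: d_def)
    moreover have "w - d = z - x (Suc k)" by (simp add: w_def d_def)
    ultimately show ?thesis by (simp add: w_def algebra_simps)
  qed
  define q where "q = sqrt (1 - m / L)"
  have q1: "0 \<le> 1 - m / L" using mL Lpos by (simp add: field_simps)
  have q2: "q\<^sup>2 = 1 - m/L" using q1 by (simp add: q_def)
  have q0: "q \<ge> 0" using q1 by (simp add: q_def)
  have qlt: "q < 1" using mpos Lpos by (simp add: q_def)
  have contr2: "norm (x (Suc k) - z) \<le> q * norm (x k - z)" if z: "z \<in> S (Suc k)" for z k
  proof -
    have "L * (norm (x (Suc k) - z))\<^sup>2 \<le> (L - m) * (norm (x k - z))\<^sup>2"
      using contr[OF z] by (simp add: norm_minus_commute)
    then have "(norm (x (Suc k) - z))\<^sup>2 \<le> (1 - m/L) * (norm (x k - z))\<^sup>2"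
      using Lpos by (simp add: field_simps)
    then have "(norm (x (Suc k) - z))\<^sup>2 \<le> (q * norm (x k - z))\<^sup>2"
      using q2 by (simp add: power_mult_distrib)
    then show ?thesis by (rule power2_le_imp_le[OF _ mult_nonneg_nonneg[OF q0 norm_ge_zero]])
  qed
  have Sdec: "S (Suc k) \<subseteq> S k" for k
    using desc by (force simp: S_def intro: order_trans)
  have Smono: "k \<le> j \<Longrightarrow> S j \<subseteq> S k" for k j
    by (rule lift_Suc_antimono_le[of S, OF Sdec])
  have xS: "x k \<in> S k" for k by (simp add: S_def)
  have conv: "x \<longlonglongrightarrow> z" if z: "\<And>k. z \<in> S k" for z
  proof -
    have bnd: "norm (x k - z) \<le> q ^ k * norm (x 0 - z)" for k
    proof (induction k)
      case 0 then show ?case by simp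
    next
      case (Suc k)
      have "norm (x (Suc k) - z) \<le> q * norm (x k - z)" by (rule contr2[OF z])
      also have "\<dots> \<le> q * (q ^ k * norm (x 0 - z))" using Suc q0 by (simp add: mult_left_mono)
      finally show ?case by simp
    qed
    have "(\<lambda>k. q ^ k * norm (x 0 - z)) \<longlonglongrightarrow> 0"
      using LIMSEQ_power_zero[of q] q0 qlt by (intro tendsto_mult_left_zero) auto
    moreover have "eventually (\<lambda>k. norm (x k - z) \<le> q ^ k * norm (x 0 - z)) sequentially"
      using bnd by (intro always_eventually allI) 
    ultimately have "(\<lambda>k. x k - z) \<longlonglongrightarrow> 0"
      by (rule Lim_null_comparison[rotated])
    then show ?thesis using LIM_zero_iff[of x z] by simp
  qed
  have Fcont: "continuous_on UNIV F"
    using has_derivative_continuous[OF deriv] by (simp add: continuous_at_imp_continuous_on)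
  have Sclosed: "closed (S k)" for k
  proof -
    have "S k = (\<Inter>c\<in>C. {z. c \<bullet> F z \<le> c \<bullet> F (x k)})" by (auto simp: S_def)
    moreover have "closed {z. c \<bullet> F z \<le> c \<bullet> F (x k)}" for c
      by (intro closed_Collect_le continuous_intros Fcont)
    ultimately show ?thesis by auto
  qed
  have Sbdd: "bounded (S 0)"
  proof -
    have bl: "bounded_linear (JF (x 0))" using has_derivative_bounded_linear[OF deriv] .
    obtain B where B: "B > 0" "\<And>v. norm (JF (x 0) v) \<le> norm v * B"
      using bounded_linear.pos_bounded[OF bl] by blast
    have mu0: "c0 \<bullet> \<mu> > 0" using cm[OF c0] mpos by linarith
    define R where "R = 2 * (norm c0 * B) / (c0 \<bullet> \<mu>)"
    have "S 0 \<subseteq> cball (x 0) R"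
    proof
      fix z assume z: "z \<in> S 0"
      define w where "w = z - x 0"
      have a: "c0 \<bullet> JF (x 0) w + (norm w)\<^sup>2/2 * (c0 \<bullet> \<mu>) \<le> c0 \<bullet> (F z - F (x 0))"
        using sc[OF c0, where y="x 0" and z=z] by (simp add: w_def)
      have b: "c0 \<bullet> (F z - F (x 0)) \<le> 0" using z c0 by (simp add: S_def inner_diff_right)
      have "- (c0 \<bullet> JF (x 0) w) \<le> norm c0 * norm (JF (x 0) w)"
        using Cauchy_Schwarz_ineq2[of c0 "JF (x 0) w"] by linarith
      also have "\<dots> \<le> norm c0 * (norm w * B)" using B by (simp add: mult_left_mono)
      finally have "(norm w)\<^sup>2/2 * (c0 \<bullet> \<mu>) \<le> (norm c0 * B) * norm w" using a b by (simp add: algebra_simps)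
      then have "norm w \<le> R" unfolding R_def using mu0 B by (intro quad_bound) auto
      then show "z \<in> cball (x 0) R" by (simp add: w_def dist_norm norm_minus_commute)
    qed
    then show ?thesis using bounded_cball bounded_subset by blast
  qed
  have "compact (S 0)" using Sbdd Sclosed[of 0] by (simp add: compact_eq_bounded_closed)
  then have "seq_compact (S 0)" by (rule compact_imp_seq_compact)
  moreover have "\<forall>n. x n \<in> S 0" using xS Smono by blast
  ultimately obtain xs r where r: "strict_mono r" "(x \<circ> r) \<longlonglongrightarrow> xs"
    unfolding seq_compact_def by blast
  have xsS: "xs \<in> S k" for k
  proof (rule closed_sequentially[OF Sclosed])
    show "x (r (n + k)) \<in> S k" for n
      using xS[of "r (n+k)"] Smono[of k "r (n+k)"] seq_suble[OF r(1), of "n+k"] by auto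
    show "(\<lambda>n. x (r (n + k))) \<longlonglongrightarrow> xs"
      using LIMSEQ_ignore_initial_segment[OF r(2), of k] by (simp add: o_def)
  qed
  have lim: "x \<longlonglongrightarrow> xs" by (rule conv[OF xsS])
  have eff: "efficient K F xs"
    unfolding efficient_def cone_le_def
  proof
    assume "\<exists>z. F xs - F z \<in> K \<and> F z \<noteq> F xs"
    then obtain z where zK: "F xs - F z \<in> K" and zne: "F z \<noteq> F xs" by blast
    have "z \<in> S k" for k
      unfolding S_def
    proof (intro CollectI ballI)
      fix c assume c: "c \<in> C"
      have "c \<bullet> F z \<le> c \<bullet> F xs" using Cdual[OF c zK] by (simp add: inner_diff_right)
      also have "\<dots> \<le> c \<bullet> F (x k)" using xsS[of k] c by (simp add: S_def)
      finally show "c \<bullet> F z \<le> c \<bullet> F (x k)" .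
    qed
    then have "x \<longlonglongrightarrow> z" by (intro conv)
    then have "z = xs" using lim LIMSEQ_unique by blast
    then show False using zne by simp
  qed
  have "\<forall>k. norm (x (Suc k) - xs) \<le> q * norm (x k - xs)"
    using contr2 xsS by blast
  then show ?thesis using lim eff by (auto simp: q_def m_def C_def)
qed

end
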